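(* Let $n>1$ be odd and let $A\in\mathcal S^{(n-1)\times n}$ be distinguished. The following are equivalent: (1) there exists a homogeneous degree-one $x\in\mathbb Z_2[x_1,\dots,x_{n-1}]$ with $x^2+\mathfrak w^A_2\in\operatorname{span}\{\theta^A_1,\dots,\theta^A_n\}$; (2) $\sigma_2\in\operatorname{span}\{\theta^A_1-x_1^2,\dots,\theta^A_{n-1}-x_{n-1}^2,\theta^A_n\}$, where $\sigma_2=\sum_{1\le k<l\le n-1}x_kx_l$ is the elementary symmetric polynomial of degree 2; (3) there exists $S\in\mathcal P_n$ such that for every $U\in\mathcal P_{n-1}$ (i.e. $U\subseteq\{1,\dots,n-1\}$), $|(J_A(U)+U)\cap S|_2=\binom{|U|}{2}\bmod 2$.
   Context: $\mathcal S=\{0,1,2,3\}$ is the Klein four-group ($\mathbb Z_2$-vector space) with $x+x=0$, $1+2=3$, $1+3=2$, $2+3=1$. A $k\times n$ matrix ($k\le n$) over $\mathcal S$ is distinguished if $A_{ii}=1$ and $A_{ij}\in\{2,3\}$ for $i\ne j$. $\mathcal P_m$ is the power set of $\{1,\dots,m\}$ with $+$ the symmetric difference; $|U|_2=|U|\bmod2$. $J_A(U)=\{j:\sum_{i\in U}A_{ij}=1\}$. Let $\alpha,\beta:\mathcal S\to\mathbb Z_2$ be linear with $\alpha(2)=\beta(3)=1$, $\alpha(3)=\beta(2)=0$; $\alpha_j=\sum_{k=1}^{n-1}\alpha(A_{kj})x_k$, $\beta_j=\sum_{k}\beta(A_{kj})x_k$, $\theta^A_j=\alpha_j\beta_j$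 in $\mathbb Z_2[x_1,\dots,x_{n-1}]$; $\mathfrak w^A=\prod_{j=1}^n(1+\alpha_j+\beta_j)$ and $\mathfrak w^A_2$ is its degree-2 homogeneous part. *)

theory Defs
  imports Main "HOL-Library.Poly_Mapping" "HOL-Library.Z2"
begin

text \<open>Multivariate polynomials over Z2 in variables x_1, x_2, ...: monomials are
  finitely supported exponent vectors nat =>0 nat, polynomials are finitely supported
  coefficient functions from monomials to bit.\<close>
type_synonym z2poly = "(nat \<Rightarrow>\<^sub>0 nat) \<Rightarrow>\<^sub>0 bit"

definition Var :: "nat \<Rightarrow> z2poly" where
  "Var k = Poly_Mapping.single (Poly_Mapping.single k 1) 1"

definition Const :: "bit \<Rightarrow> z2poly" where
  "Const c = Poly_Mapping.single 0 c"

definition mdeg :: "(nat \<Rightarrow>\<^sub>0 nat) \<Rightarrow> nat" where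
  "mdeg m = (\<Sum>k\<in>Poly_Mapping.keys m. Poly_Mapping.lookup m k)"

definition hpart :: "nat \<Rightarrow> z2poly \<Rightarrow> z2poly" where
  "hpart d p = Abs_poly_mapping (\<lambda>m. if mdeg m = d then Poly_Mapping.lookup p m else 0)"

definition pspan :: "nat \<Rightarrow> (nat \<Rightarrow> z2poly) \<Rightarrow> z2poly set" where
  "pspan N f = {\<Sum>j=1..N. Const (c j) * f j | c. True}"

text \<open>Klein four-group S = {0,1,2,3}, addition = bitwise xor.\<close>
definition ksum :: "(nat \<Rightarrow> nat) \<Rightarrow> nat set \<Rightarrow> nat" where
  "ksum g U = Finite_Set.fold (\<lambda>i a. xor (g i) a) 0 U"

text \<open>Matrix A with k rows and n columns, 1-based indices.\<close>
definition distinguished :: "nat \<Rightarrow> nat \<Rightarrow> (nat \<Rightarrow> nat \<Rightarrow> nat) \<Rightarrow> bool" where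
  "distinguished k n A \<longleftrightarrow> k \<le> n \<and>
     (\<forall>i\<in>{1..k}. \<forall>j\<in>{1..n}. (if i = j then A i j = 1 else A i j \<in> {2,3}))"

definition JA :: "(nat \<Rightarrow> nat \<Rightarrow> nat) \<Rightarrow> nat \<Rightarrow> nat set \<Rightarrow> nat set" where
  "JA A n U = {j\<in>{1..n}. ksum (\<lambda>i. A i j) U = 1}"

text \<open>linear maps alpha, beta : S -> Z2 with alpha 2 = beta 3 = 1, alpha 3 = beta 2 = 0
  (hence alpha 1 = beta 1 = 1, alpha 0 = beta 0 = 0).\<close>
definition alphaS :: "nat \<Rightarrow> bit" where
  "alphaS s = (if s = 1 \<or> s = 2 then 1 else 0)"
definition betaS :: "nat \<Rightarrow> bit" where
  "betaS s = (if s = 1 \<or> s = 3 then 1 else 0)"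

definition alphaA :: "(nat \<Rightarrow> nat \<Rightarrow> nat) \<Rightarrow> nat \<Rightarrow> nat \<Rightarrow> z2poly" where
  "alphaA A n j = (\<Sum>k=1..n-1. Const (alphaS (A k j)) * Var k)"
definition betaA :: "(nat \<Rightarrow> nat \<Rightarrow> nat) \<Rightarrow> nat \<Rightarrow> nat \<Rightarrow> z2poly" where
  "betaA A n j = (\<Sum>k=1..n-1. Const (betaS (A k j)) * Var k)"

definition thetaA :: "(nat \<Rightarrow> nat \<Rightarrow> nat) \<Rightarrow> nat \<Rightarrow> nat \<Rightarrow> z2poly" where
  "thetaA A n j = alphaA A n j * betaA A n j"

definition wA :: "(nat \<Rightarrow> nat \<Rightarrow> nat) \<Rightarrow> nat \<Rightarrow> z2poly" where
  "wA A n = (\<Prod>j=1..n. 1 + alphaA A n j + betaA A n j)"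

definition sigma2 :: "nat \<Rightarrow> z2poly" where
  "sigma2 m = (\<Sum>(k,l)\<in>{(k,l). 1 \<le> k \<and> k < l \<and> l \<le> m}. Var k * Var l)"

end

theory Submission
  imports Defs
begin
declare add_bit_eq_xor[simp del] mult_bit_eq_and[simp del]

lemma lookup_Const_mult: "Poly_Mapping.lookup (Const c * p) a = c * Poly_Mapping.lookup p a"
proof -
  have "Const c * p = Poly_Mapping.map ((*) c) p"
    by (simp add: Const_def mult_map_scale_conv_mult)
  then show ?thesis by (simp add: Poly_Mapping.map.rep_eq when_def)
qed

lemma Const_add: "Const (a + b) = Const a + Const b"
  by (simp add: Const_def single_add)
lemma Const_mult: "Const (a * b) = Const a * Const b"
  by (simp add: Const_def mult_single)
lemma Const_0[simp]: "Const 0 = 0" by (simp add: Const_def)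
lemma Const_1[simp]: "Const 1 = 1" by (simp add: Const_def)

definition mono2 :: "nat \<Rightarrow> nat \<Rightarrow> nat \<Rightarrow>\<^sub>0 nat" where
  "mono2 k l = Poly_Mapping.single k 1 + Poly_Mapping.single l 1"

lemma Var_mult: "Var k * Var l = Poly_Mapping.single (mono2 k l) 1"
  by (simp add: Var_def mono2_def mult_single)

lemma lookup_mono2: "Poly_Mapping.lookup (mono2 k l) i = (if i = k then 1 else 0) + (if i = l then 1 else 0)"
  by (simp add: mono2_def Poly_Mapping.lookup_add lookup_single when_def)

lemma mono2_eq_iff: "k \<le> l \<Longrightarrow> k' \<le> l' \<Longrightarrow> mono2 k l = mono2 k' l' \<longleftrightarrow> k = k' \<and> l = l'"
proof
  assume le: "k \<le> l" "k' \<le> l'" and eq: "mono2 k l = mono2 k' l'"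
  have e: "\<And>i. Poly_Mapping.lookup (mono2 k l) i = Poly_Mapping.lookup (mono2 k' l') i" using eq by simp
  have f1: "(if k = k' then 1 else 0) + (if k = l' then 1 else 0) = (1::nat) + (if k = l then 1 else 0)"
    using e[of k] by (simp add: lookup_mono2)
  have f2: "(if l = k' then 1 else 0) + (if l = l' then 1 else 0) = (if l = k then 1 else 0) + (1::nat)"
    using e[of l] by (simp add: lookup_mono2)
  show "k = k' \<and> l = l'"
    using f1 f2 le by (cases "k = l"; cases "k = k'"; cases "k = l'"; cases "l = k'"; cases "l = l'") auto
qed auto

lemma bit_double[simp]: "x + x = (0::bit)" by (cases x) simp_all
lemma bit_sq[simp]: "x * x = (x::bit)" by (cases x) simp_all
lemma bit_of_nat: "(of_nat x :: bit) = (if even x then 0 else 1)"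
  by (induction x) auto

lemma mdeg_sum: "finite K \<Longrightarrow> Poly_Mapping.keys m \<subseteq> K \<Longrightarrow> mdeg m = (\<Sum>k\<in>K. Poly_Mapping.lookup m k)"
  unfolding mdeg_def by (rule sum.mono_neutral_left) (auto simp: in_keys_iff)

lemma mdeg_add: "mdeg (a + b) = mdeg a + mdeg b"
proof -
  let ?K = "Poly_Mapping.keys a \<union> Poly_Mapping.keys b"
  have f: "finite ?K" by simp
  have "mdeg (a + b) = (\<Sum>k\<in>?K. Poly_Mapping.lookup (a+b) k)"
    by (rule mdeg_sum[OF f]) (rule keys_add)
  also have "\<dots> = (\<Sum>k\<in>?K. Poly_Mapping.lookup a k) + (\<Sum>k\<in>?K. Poly_Mapping.lookup b k)"
    by (simp add: Poly_Mapping.lookup_add sum.distrib)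
  also have "\<dots> = mdeg a + mdeg b"
    using mdeg_sum[OF f, of a] mdeg_sum[OF f, of b] by simp
  finally show ?thesis .
qed

lemma mdeg_single1[simp]: "mdeg (Poly_Mapping.single k (1::nat)) = 1"
  by (simp add: mdeg_def)
lemma mdeg_single1'[simp]: "mdeg (Poly_Mapping.single k (Suc 0)) = 1"
  by (simp add: mdeg_def)
lemma mdeg_0[simp]: "mdeg 0 = 0" by (simp add: mdeg_def)

lemma lookup_hpart: "Poly_Mapping.lookup (hpart d p) m = (if mdeg m = d then Poly_Mapping.lookup p m else 0)"
proof -
  have "finite {m. (if mdeg m = d then Poly_Mapping.lookup p m else 0) \<noteq> 0}"
    by (rule finite_subset[of _ "Poly_Mapping.keys p"]) (auto simp: in_keys_iff)
  then show ?thesis by (simp add: hpart_def)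
qed

lemma hpart_add: "hpart d (p + q) = hpart d p + hpart d q"
  by (rule poly_mapping_eqI) (simp add: lookup_hpart Poly_Mapping.lookup_add)

lemma hpart_0[simp]: "hpart d 0 = 0"
  by (rule poly_mapping_eqI) (simp add: lookup_hpart)

lemma hpart_sum: "hpart d (sum f K) = (\<Sum>x\<in>K. hpart d (f x))"
  by (rule poly_mapping_eqI) (simp add: lookup_hpart lookup_sum)

lemma hpart_single: "hpart d (Poly_Mapping.single a c) = (if mdeg a = d then Poly_Mapping.single a c else 0)"
  by (rule poly_mapping_eqI) (auto simp add: lookup_hpart lookup_single when_def)

lemma pm_expand: "p = (\<Sum>a\<in>Poly_Mapping.keys p. Poly_Mapping.single a (Poly_Mapping.lookup p a))"
proof (rule poly_mapping_eqI)
  fix m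
  show "Poly_Mapping.lookup p m = Poly_Mapping.lookup (\<Sum>a\<in>Poly_Mapping.keys p. Poly_Mapping.single a (Poly_Mapping.lookup p a)) m"
    by (simp add: lookup_sum lookup_single when_def in_keys_iff)
qed

lemma hpart_mult_single:
  "hpart d (p * Poly_Mapping.single t c) =
     (if mdeg t \<le> d then hpart (d - mdeg t) p * Poly_Mapping.single t c else 0)"
proof -
  let ?K = "Poly_Mapping.keys p"
  have "p * Poly_Mapping.single t c = (\<Sum>a\<in>?K. Poly_Mapping.single (a + t) (Poly_Mapping.lookup p a * c))"
    by (subst pm_expand) (simp add: sum_distrib_right mult_single)
  then have L: "hpart d (p * Poly_Mapping.single t c) = (\<Sum>a\<in>?K. if mdeg a + mdeg t = d then Poly_Mapping.single (a + t) (Poly_Mapping.lookup p a * c) else 0)"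
    by (simp add: hpart_sum hpart_single mdeg_add)
  have E: "hpart e p = (\<Sum>a\<in>?K. hpart e (Poly_Mapping.single a (Poly_Mapping.lookup p a)))" for e
    by (rule trans[OF arg_cong[where f="hpart e", OF pm_expand[of p]] hpart_sum])
  have R: "hpart (d - mdeg t) p * Poly_Mapping.single t c = (\<Sum>a\<in>?K. if mdeg a = d - mdeg t then Poly_Mapping.single (a + t) (Poly_Mapping.lookup p a * c) else 0)"
    unfolding E[of "d - mdeg t"] sum_distrib_right
    by (rule sum.cong) (auto simp: hpart_single mult_single)
  show ?thesis using L R by (auto intro!: sum.cong)
qed


definition Lf :: "nat \<Rightarrow> (nat \<Rightarrow> bit) \<Rightarrow> z2poly" where
  "Lf m c = (\<Sum>k=1..m. Const (c k) * Var k)"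

definition pairs :: "nat set \<Rightarrow> (nat \<times> nat) set" where
  "pairs I = {(k,l). k \<in> I \<and> l \<in> I \<and> k < l}"

definition NF :: "nat \<Rightarrow> (nat \<Rightarrow> bit) \<Rightarrow> (nat \<Rightarrow> nat \<Rightarrow> bit) \<Rightarrow> z2poly" where
  "NF m s f = (\<Sum>k=1..m. Const (s k) * (Var k * Var k)) + (\<Sum>(k,l)\<in>pairs {1..m}. Const (f k l) * (Var k * Var l))"

lemma pairs_Sigma: "pairs I = Sigma I (\<lambda>k. {l\<in>I. k < l})"
  by (auto simp: pairs_def)

lemma finite_pairs[simp]: "finite I \<Longrightarrow> finite (pairs I)"
  unfolding pairs_Sigma by auto

lemma sum_pairs: "finite I \<Longrightarrow> (\<Sum>(k,l)\<in>pairs I. h k l) = (\<Sum>k\<in>I. \<Sum>l\<in>{l\<in>I. k < l}. h k l)"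
  unfolding pairs_Sigma by (subst sum.Sigma) auto

lemma DS:
  fixes g :: "nat \<Rightarrow> nat \<Rightarrow> 'a::comm_monoid_add"
  assumes "finite I"
  shows "(\<Sum>k\<in>I. \<Sum>l\<in>I. g k l) = (\<Sum>k\<in>I. g k k) + (\<Sum>(k,l)\<in>pairs I. g k l + g l k)"
proof -
  have split: "(\<Sum>l\<in>I. g k l) = g k k + (\<Sum>l\<in>{l\<in>I. k < l}. g k l) + (\<Sum>l\<in>{l\<in>I. l < k}. g k l)"
    if "k \<in> I" for k
  proof -
    have "(\<Sum>l\<in>I. g k l) = (\<Sum>l\<in>I. (if l = k then g k l else 0) + (if k < l then g k l else 0) + (if l < k then g k l else 0))"
      by (rule sum.cong) auto
    also have "\<dots> = (\<Sum>l\<in>I. if l = k then g k l else 0) + (\<Sum>l\<in>I. if k < l then g k l else 0) + (\<Sum>l\<in>I. if l < k then g k l else 0)"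
      by (simp add: sum.distrib)
    also have "\<dots> = g k k + (\<Sum>l\<in>{l\<in>I. k < l}. g k l) + (\<Sum>l\<in>{l\<in>I. l < k}. g k l)"
      using assms that by (simp add: sum.inter_filter)
    finally show ?thesis .
  qed
  have "(\<Sum>k\<in>I. \<Sum>l\<in>I. g k l) = (\<Sum>k\<in>I. g k k) + (\<Sum>k\<in>I. \<Sum>l\<in>{l\<in>I. k < l}. g k l) + (\<Sum>k\<in>I. \<Sum>l\<in>{l\<in>I. l < k}. g k l)"
    by (simp add: split sum.distrib)
  also have "(\<Sum>k\<in>I. \<Sum>l\<in>{l\<in>I. l < k}. g k l) = (\<Sum>l\<in>I. \<Sum>k\<in>{k\<in>I. l < k}. g k l)"
    using assms by (rule sum.swap_restrict[OF _ assms])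
  also have "(\<Sum>k\<in>I. g k k) + (\<Sum>k\<in>I. \<Sum>l\<in>{l\<in>I. k < l}. g k l) + (\<Sum>l\<in>I. \<Sum>k\<in>{k\<in>I. l < k}. g k l)
     = (\<Sum>k\<in>I. g k k) + (\<Sum>k\<in>I. \<Sum>l\<in>{l\<in>I. k < l}. g k l + g l k)"
    by (simp add: sum.distrib add.assoc)
  also have "(\<Sum>k\<in>I. \<Sum>l\<in>{l\<in>I. k < l}. g k l + g l k) = (\<Sum>(k,l)\<in>pairs I. g k l + g l k)"
    using sum_pairs[OF assms, of "\<lambda>k l. g k l + g l k"] by simp
  finally show ?thesis .
qed

lemma Const_Var: "Const c * Var k = Poly_Mapping.single (Poly_Mapping.single k 1) c"
  by (simp add: Const_def Var_def mult_single)

lemma hpart_mult_Lf_Suc: "hpart (Suc d) (p * Lf m c) = hpart d p * Lf m c"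
  by (simp add: Lf_def sum_distrib_left hpart_sum Const_Var hpart_mult_single)

lemma hpart_mult_Lf_0: "hpart 0 (p * Lf m c) = 0"
  by (simp add: Lf_def sum_distrib_left hpart_sum Const_Var hpart_mult_single)

lemma Lf_add: "Lf m a + Lf m b = Lf m (\<lambda>k. a k + b k)"
  by (simp add: Lf_def sum.distrib[symmetric] Const_add distrib_right)

lemma Lf_zero: "Lf m (\<lambda>k. 0) = 0"
  by (simp add: Lf_def)

lemma NF_add: "NF m s f + NF m s' f' = NF m (\<lambda>k. s k + s' k) (\<lambda>k l. f k l + f' k l)"
proof -
  have a: "(\<Sum>k=1..m. Const (s k) * (Var k * Var k)) + (\<Sum>k=1..m. Const (s' k) * (Var k * Var k))
      = (\<Sum>k=1..m. Const (s k + s' k) * (Var k * Var k))"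
    by (simp add: sum.distrib[symmetric] Const_add distrib_right)
  have b: "(\<Sum>(k,l)\<in>pairs {1..m}. Const (f k l) * (Var k * Var l)) + (\<Sum>(k,l)\<in>pairs {1..m}. Const (f' k l) * (Var k * Var l))
      = (\<Sum>(k,l)\<in>pairs {1..m}. Const (f k l + f' k l) * (Var k * Var l))"
    by (simp add: sum.distrib[symmetric] Const_add distrib_right split_def)
  show ?thesis unfolding NF_def using a b by (simp add: algebra_simps)
qed

lemma NF_zero: "NF m (\<lambda>k. 0) (\<lambda>k l. 0) = 0"
  by (simp add: NF_def)

lemma NF_scale: "Const c * NF m s f = NF m (\<lambda>k. c * s k) (\<lambda>k l. c * f k l)"
  by (simp add: NF_def distrib_left sum_distrib_left Const_mult split_def mult.assoc)

lemma NF_sum: "finite J \<Longrightarrow> (\<Sum>j\<in>J. NF m (s j) (f j)) = NF m (\<lambda>k. \<Sum>j\<in>J. s j k) (\<lambda>k l. \<Sum>j\<in>J. f j k l)"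
proof (induction J rule: finite_induct)
  case empty
  then show ?case using NF_zero by simp
next
  case (insert x F)
  then show ?case by (simp add: NF_add)
qed

lemma NF_cong: "(\<And>k. k \<in> {1..m} \<Longrightarrow> s k = s' k) \<Longrightarrow> (\<And>k l. (k,l) \<in> pairs {1..m} \<Longrightarrow> f k l = f' k l)
   \<Longrightarrow> NF m s f = NF m s' f'"
  unfolding NF_def by (intro arg_cong2[where f="(+)"] sum.cong) auto

lemma Const_VV_add: "Const x * (Var k * Var l) + Const y * (Var l * Var k) = Const (x + y) * (Var k * Var l)"
proof -
  have "Var l * Var k = Var k * Var l" by (rule mult.commute)
  then show ?thesis by (simp only: Const_add distrib_right)
qed

lemma Lf_mult: "Lf m a * Lf m b = NF m (\<lambda>k. a k * b k) (\<lambda>k l. a k * b l + a l * b k)"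
proof -
  let ?g = "\<lambda>k l. Const (a k * b l) * (Var k * Var l)"
  have "Lf m a * Lf m b = (\<Sum>k\<in>{1..m}. \<Sum>l\<in>{1..m}. ?g k l)"
    unfolding Lf_def sum_product by (intro sum.cong refl) (simp add: Const_mult mult_ac)
  also have "\<dots> = (\<Sum>k\<in>{1..m}. ?g k k) + (\<Sum>(k,l)\<in>pairs {1..m}. ?g k l + ?g l k)"
    by (rule DS) simp
  also have "(\<Sum>(k,l)\<in>pairs {1..m}. ?g k l + ?g l k) = (\<Sum>(k,l)\<in>pairs {1..m}. Const (a k * b l + a l * b k) * (Var k * Var l))"
    by (intro sum.cong refl) (clarsimp simp: Const_VV_add)
  also have "(\<Sum>k\<in>{1..m}. ?g k k) + (\<Sum>(k,l)\<in>pairs {1..m}. Const (a k * b l + a l * b k) * (Var k * Var l))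
     = NF m (\<lambda>k. a k * b k) (\<lambda>k l. a k * b l + a l * b k)"
    unfolding NF_def by simp
  finally show ?thesis .
qed


definition val :: "z2poly \<Rightarrow> nat set \<Rightarrow> bit" where
  "val p U = (\<Sum>k\<in>U. Poly_Mapping.lookup p (mono2 k k)) + (\<Sum>(k,l)\<in>pairs U. Poly_Mapping.lookup p (mono2 k l))"

lemma mem_pairs[simp]: "(a,b) \<in> pairs U \<longleftrightarrow> a \<in> U \<and> b \<in> U \<and> a < b"
  by (simp add: pairs_def)

lemma val_add: "val (p + q) U = val p U + val q U"
  by (simp add: val_def Poly_Mapping.lookup_add sum.distrib split_def algebra_simps)

lemma val_Const: "val (Const c * p) U = c * val p U"
  by (simp add: val_def lookup_Const_mult sum_distrib_left split_def distrib_left)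

lemma val_zero[simp]: "val 0 U = 0"
  by (simp add: val_def)

lemma val_sum: "finite J \<Longrightarrow> val (\<Sum>j\<in>J. f j) U = (\<Sum>j\<in>J. val (f j) U)"
  by (induction J rule: finite_induct) (simp_all add: val_add)

lemma val_VV_diag: "finite U \<Longrightarrow> val (Var k * Var k) U = of_bool (k \<in> U)"
proof -
  assume fin: "finite U"
  have a: "(\<Sum>i\<in>U. Poly_Mapping.lookup (Var k * Var k) (mono2 i i)) = (\<Sum>i\<in>U. if i = k then 1 else 0)"
    by (rule sum.cong) (auto simp: Var_mult lookup_single when_def mono2_eq_iff)
  have b: "(\<Sum>(i,j)\<in>pairs U. Poly_Mapping.lookup (Var k * Var k) (mono2 i j)) = 0"
    by (rule sum.neutral) (auto simp: Var_mult lookup_single when_def pairs_def mono2_eq_iff)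
  show ?thesis using fin by (simp add: val_def a b)
qed

lemma val_VV_pair: "finite U \<Longrightarrow> k < l \<Longrightarrow> val (Var k * Var l) U = of_bool (k \<in> U \<and> l \<in> U)"
proof -
  assume fin: "finite U" and kl: "k < l"
  have a: "(\<Sum>i\<in>U. Poly_Mapping.lookup (Var k * Var l) (mono2 i i)) = 0"
    by (rule sum.neutral) (use kl in \<open>auto simp: Var_mult lookup_single when_def mono2_eq_iff\<close>)
  have b: "(\<Sum>(i,j)\<in>pairs U. Poly_Mapping.lookup (Var k * Var l) (mono2 i j)) = (\<Sum>x\<in>pairs U. if x = (k,l) then 1 else 0)"
    by (rule sum.cong) (use kl in \<open>auto simp: Var_mult lookup_single when_def pairs_def mono2_eq_iff split: if_split_asm\<close>)
  have c: "(\<Sum>x\<in>pairs U. if x = (k,l) then 1 else 0) = (of_bool ((k,l) \<in> pairs U) :: bit)"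
    using fin by simp
  show ?thesis using kl by (simp add: val_def a b c)
qed

lemma val_NF:
  assumes U: "U \<subseteq> {1..m}"
  shows "val (NF m s f) U = (\<Sum>k\<in>U. s k) + (\<Sum>(k,l)\<in>pairs U. f k l)"
proof -
  have fin: "finite U" using U finite_subset by blast
  have a: "val (\<Sum>k=1..m. Const (s k) * (Var k * Var k)) U = (\<Sum>k\<in>U. s k)"
  proof -
    have "val (\<Sum>k=1..m. Const (s k) * (Var k * Var k)) U = (\<Sum>k\<in>{1..m}. s k * of_bool (k \<in> U))"
      by (simp add: val_sum val_Const val_VV_diag fin)
    also have "\<dots> = (\<Sum>k\<in>{1..m} \<inter> {k. k \<in> U}. s k)" by (rule sum_mult_of_bool_eq) simp
    also have "{1..m} \<inter> {k. k \<in> U} = U" using U by auto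
    finally show ?thesis .
  qed
  have b: "val (\<Sum>(k,l)\<in>pairs {1..m}. Const (f k l) * (Var k * Var l)) U = (\<Sum>(k,l)\<in>pairs U. f k l)"
  proof -
    have "val (\<Sum>(k,l)\<in>pairs {1..m}. Const (f k l) * (Var k * Var l)) U
        = (\<Sum>x\<in>pairs {1..m}. val ((\<lambda>(k,l). Const (f k l) * (Var k * Var l)) x) U)"
      by (rule val_sum) simp
    also have "\<dots> = (\<Sum>x\<in>pairs {1..m}. f (fst x) (snd x) * of_bool (x \<in> pairs U))"
      by (rule sum.cong) (auto simp: val_Const val_VV_pair fin)
    also have "\<dots> = (\<Sum>x\<in>pairs {1..m} \<inter> {x. x \<in> pairs U}. f (fst x) (snd x))"
      by (rule sum_mult_of_bool_eq) simp
    also have "pairs {1..m} \<inter> {x. x \<in> pairs U} = pairs U" using U by (auto simp: pairs_def)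
    finally show ?thesis by (simp add: split_def)
  qed
  show ?thesis unfolding NF_def val_add a b ..
qed

lemma val_Lf_mult:
  assumes U: "U \<subseteq> {1..m}"
  shows "val (Lf m a * Lf m b) U = (\<Sum>k\<in>U. a k) * (\<Sum>k\<in>U. b k)"
proof -
  have fin: "finite U" using U finite_subset by blast
  have "(\<Sum>k\<in>U. a k) * (\<Sum>k\<in>U. b k) = (\<Sum>k\<in>U. \<Sum>l\<in>U. a k * b l)"
    by (simp add: sum_product)
  also have "\<dots> = (\<Sum>k\<in>U. a k * b k) + (\<Sum>(k,l)\<in>pairs U. a k * b l + a l * b k)"
    by (rule DS[OF fin])
  finally show ?thesis by (simp add: Lf_mult val_NF[OF U])
qed

lemma val_NF_single: "k \<in> {1..m} \<Longrightarrow> val (NF m s f) {k} = s k"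
proof -
  assume k: "k \<in> {1..m}"
  have "pairs {k} = {}" by (auto simp: pairs_def)
  then show ?thesis using k by (subst val_NF) auto
qed

lemma val_NF_pair: "(k,l) \<in> pairs {1..m} \<Longrightarrow> val (NF m s f) {k,l} = s k + s l + f k l"
proof -
  assume kl: "(k,l) \<in> pairs {1..m}"
  then have U: "{k,l} \<subseteq> {1..m}" and lt: "k < l" by (auto simp: pairs_def)
  have "pairs {k,l} = {(k,l)}" using lt by (auto simp: pairs_def)
  then show ?thesis using lt by (simp add: val_NF[OF U])
qed

lemma NF_unique:
  assumes "NF m s f = NF m s' f'" and "(k,l) \<in> pairs {1..m}"
  shows "f k l = f' k l"
proof -
  have kl: "k \<in> {1..m}" "l \<in> {1..m}" using assms(2) by (auto simp: pairs_def)
  have "s k = s' k" using val_NF_single[OF kl(1), of s f] val_NF_single[OF kl(1), of s' f'] assms(1) by simp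
  moreover have "s l = s' l" using val_NF_single[OF kl(2), of s f] val_NF_single[OF kl(2), of s' f'] assms(1) by simp
  moreover have "s k + s l + f k l = s' k + s' l + f' k l"
    using val_NF_pair[OF assms(2), of s f] val_NF_pair[OF assms(2), of s' f'] assms(1) by simp
  ultimately show ?thesis by simp
qed

lemma Lf_delta: "k \<in> {1..m} \<Longrightarrow> Lf m (\<lambda>i. if i = k then 1 else 0) = Var k"
proof -
  assume k: "k \<in> {1..m}"
  have "Lf m (\<lambda>i. if i = k then 1 else 0) = (\<Sum>i\<in>{1..m}. if i = k then Var i else 0)"
    unfolding Lf_def by (rule sum.cong) auto
  also have "\<dots> = Var k" using k by simp
  finally show ?thesis .
qed

lemma Lf_square: "Lf m a * Lf m a = NF m a (\<lambda>k l. 0)"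
  unfolding Lf_mult by (rule NF_cong) (simp_all add: mult.commute)

lemma bit_aux: "(a + b) * (c + d) + (e + b * d) = (a * c + e) + (a * d + c * (b::bit))"
  by (cases a; cases b; cases c; cases d; cases e) simp_all

lemma prod_inv:
  fixes t :: nat and v :: "nat \<Rightarrow> nat \<Rightarrow> bit"
  shows "hpart 0 (\<Prod>j=1..t. 1 + Lf m (v j)) = 1 \<and>
   hpart 1 (\<Prod>j=1..t. 1 + Lf m (v j)) = Lf m (\<lambda>k. \<Sum>j=1..t. v j k) \<and>
   (\<exists>sq. hpart 2 (\<Prod>j=1..t. 1 + Lf m (v j)) =
      NF m sq (\<lambda>k l. (\<Sum>j=1..t. v j k) * (\<Sum>j=1..t. v j l) + (\<Sum>j=1..t. v j k * v j l)))"
proof (induction t)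
  case 0
  have h: "hpart d (1::z2poly) = (if d = 0 then 1 else 0)" for d
    using hpart_single[of d 0 "1::bit"] by simp
  show ?case by (simp add: h Lf_zero) (rule exI[of _ "\<lambda>k. 0"], simp add: NF_zero)
next
  case (Suc t)
  let ?P = "\<Prod>j=1..t. 1 + Lf m (v j)"
  let ?s = "\<lambda>k. \<Sum>j=1..t. v j k"
  have P: "(\<Prod>j=1..Suc t. 1 + Lf m (v j)) = ?P * (1 + Lf m (v (Suc t)))" by simp
  have H: "hpart d (?P * (1 + Lf m (v (Suc t)))) = hpart d ?P + hpart d (?P * Lf m (v (Suc t)))" for d
    by (simp add: distrib_left hpart_add)
  from Suc obtain sq where IH0: "hpart 0 ?P = 1" and IH1: "hpart 1 ?P = Lf m ?s"
    and IH2: "hpart 2 ?P = NF m sq (\<lambda>k l. ?s k * ?s l + (\<Sum>j=1..t. v j k * v j l))" by blast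
  have M1: "hpart 1 (?P * Lf m (v (Suc t))) = hpart 0 ?P * Lf m (v (Suc t))"
    using hpart_mult_Lf_Suc[of 0 ?P m "v (Suc t)"] by simp
  have M2: "hpart 2 (?P * Lf m (v (Suc t))) = hpart 1 ?P * Lf m (v (Suc t))"
    using hpart_mult_Lf_Suc[of 1 ?P m "v (Suc t)"] by (simp add: numeral_2_eq_2)
  have h0: "hpart 0 (\<Prod>j=1..Suc t. 1 + Lf m (v j)) = 1"
    unfolding P H IH0 hpart_mult_Lf_0 by simp
  have h1: "hpart 1 (\<Prod>j=1..Suc t. 1 + Lf m (v j)) = Lf m (\<lambda>k. \<Sum>j=1..Suc t. v j k)"
    unfolding P H M1 IH0 IH1 by (simp add: Lf_add)
  have "hpart 2 (\<Prod>j=1..Suc t. 1 + Lf m (v j)) = NF m sq (\<lambda>k l. ?s k * ?s l + (\<Sum>j=1..t. v j k * v j l)) + Lf m ?s * Lf m (v (Suc t))"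
    unfolding P H M2 IH1 IH2 ..
  also have "\<dots> = NF m (\<lambda>k. sq k + ?s k * v (Suc t) k)
       (\<lambda>k l. (\<Sum>j=1..Suc t. v j k) * (\<Sum>j=1..Suc t. v j l) + (\<Sum>j=1..Suc t. v j k * v j l))"
    unfolding Lf_mult NF_add by (simp add: bit_aux)
  finally show ?case using h0 h1 by blast
qed

lemma ksum_empty: "ksum g {} = 0" by (simp add: ksum_def)

lemma ksum_insert: "finite U \<Longrightarrow> x \<notin> U \<Longrightarrow> ksum g (insert x U) = xor (g x) (ksum g U)"
proof -
  assume "finite U" "x \<notin> U"
  interpret c: comp_fun_commute "\<lambda>i a. xor (g i) (a::nat)"
    by unfold_locales (auto simp: fun_eq_iff xor.left_commute)
  show ?thesis using \<open>finite U\<close> \<open>x \<notin> U\<close> by (simp add: ksum_def)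
qed

lemma lt4: "(x::nat) < 4 \<Longrightarrow> x = 0 \<or> x = 1 \<or> x = 2 \<or> x = 3" by auto

lemma xor_tab: "xor (0::nat) y = y" "xor x (0::nat) = x" "xor (1::nat) 1 = 0" "xor (1::nat) 2 = 3" "xor (1::nat) 3 = 2"
  "xor (2::nat) 1 = 3" "xor (2::nat) 2 = 0" "xor (2::nat) 3 = 1" "xor (3::nat) 1 = 2" "xor (3::nat) 2 = 1" "xor (3::nat) 3 = 0"
  by simp_all

lemma xor_lin: "(x::nat) < 4 \<Longrightarrow> y < 4 \<Longrightarrow> xor x y < 4 \<and> alphaS (xor x y) = alphaS x + alphaS y \<and> betaS (xor x y) = betaS x + betaS y"
proof -
  assume hx: "x < 4" and hy: "y < 4"
  from lt4[OF hx] lt4[OF hy] show ?thesis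
    by (elim disjE) (simp_all add: xor_tab alphaS_def betaS_def)
qed

lemma ksum_lin: "finite U \<Longrightarrow> (\<forall>i\<in>U. g i < 4) \<Longrightarrow>
   ksum g U < 4 \<and> alphaS (ksum g U) = (\<Sum>i\<in>U. alphaS (g i)) \<and> betaS (ksum g U) = (\<Sum>i\<in>U. betaS (g i))"
proof (induction U rule: finite_induct)
  case empty
  then show ?case by (simp add: ksum_empty alphaS_def betaS_def)
next
  case (insert x F)
  then show ?case using xor_lin[of "g x" "ksum g F"] by (simp add: ksum_insert add.commute)
qed

lemma ab_prod: "(x::nat) < 4 \<Longrightarrow> alphaS x * betaS x = of_bool (x = 1)"
  by (auto dest!: lt4 simp: alphaS_def betaS_def)


lemma card_pairs: "finite U \<Longrightarrow> card (pairs U) = card U choose 2"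
proof -
  assume fin: "finite U"
  have "(\<Sum>k\<in>U. \<Sum>l\<in>U. (1::nat)) = (\<Sum>k\<in>U. 1) + (\<Sum>(k,l)\<in>pairs U. 1 + 1)"
    by (rule DS[OF fin])
  then have "card U * card U = card U + 2 * card (pairs U)"
    by (simp add: split_def)
  then have "2 * card (pairs U) = card U * (card U - 1)"
    by (simp add: algebra_simps diff_mult_distrib2)
  then show ?thesis by (simp add: choose_two)
qed

lemma sigma2_NF: "sigma2 m = NF m (\<lambda>k. 0) (\<lambda>k l. 1)"
proof -
  have "{(k,l). 1 \<le> k \<and> k < l \<and> l \<le> m} = pairs {1..m}" by (auto simp: pairs_def)
  then show ?thesis by (simp add: sigma2_def NF_def)
qed

lemma val_sigma2: "U \<subseteq> {1..m} \<Longrightarrow> val (sigma2 m) U = of_nat (card U choose 2)"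
proof -
  assume U: "U \<subseteq> {1..m}"
  then have fin: "finite U" using finite_subset by blast
  have "val (sigma2 m) U = (\<Sum>(k,l)\<in>pairs U. 1)" by (simp add: sigma2_NF val_NF[OF U])
  also have "\<dots> = of_nat (card (pairs U))" by (simp add: split_def)
  finally show ?thesis using card_pairs[OF fin] by simp
qed

lemma bit_of_bool_add: "of_bool P + of_bool Q = (of_bool (P \<noteq> Q) :: bit)"
  by auto

lemma bit_eq_of_bool: "(c::bit) = of_bool (c = 1)"
  by (cases c) auto

lemma bit_of_nat_eq: "(of_nat x :: bit) = of_nat y \<longleftrightarrow> x mod 2 = y mod 2"
  by (simp add: bit_of_nat) presburger

context
  fixes n :: nat and A :: "nat \<Rightarrow> nat \<Rightarrow> nat"
  assumes n1: "n > 1" and nodd: "odd n" and dist: "distinguished (n - 1) n A"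
begin

lemma D: "i \<in> {1..n-1} \<Longrightarrow> j \<in> {1..n} \<Longrightarrow> (if i = j then A i j = 1 else A i j \<in> {2,3})"
  using dist unfolding distinguished_def by blast

lemma D1: "i \<in> {1..n-1} \<Longrightarrow> j \<in> {1..n} \<Longrightarrow> A i j < 4"
  using D[of i j] by (auto split: if_splits)

lemma D2: "i \<in> {1..n-1} \<Longrightarrow> j \<in> {1..n} \<Longrightarrow> alphaS (A i j) * betaS (A i j) = (if i = j then 1 else 0)"
  using D[of i j] by (auto split: if_splits simp: alphaS_def betaS_def)

lemma D3: "i \<in> {1..n-1} \<Longrightarrow> j \<in> {1..n} \<Longrightarrow> alphaS (A i j) + betaS (A i j) = (if i = j then 0 else 1)"
  using D[of i j] by (auto split: if_splits simp: alphaS_def betaS_def)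

definition cr :: "nat \<Rightarrow> nat \<Rightarrow> nat \<Rightarrow> bit" where
  "cr j k l = alphaS (A k j) * betaS (A l j) + alphaS (A l j) * betaS (A k j)"

lemma theta_Lf: "thetaA A n j = Lf (n-1) (\<lambda>k. alphaS (A k j)) * Lf (n-1) (\<lambda>k. betaS (A k j))"
  by (simp add: thetaA_def alphaA_def betaA_def Lf_def)

lemma theta_NF: "j \<in> {1..n} \<Longrightarrow> thetaA A n j = NF (n-1) (\<lambda>k. if k = j then 1 else 0) (cr j)"
  unfolding theta_Lf Lf_mult by (rule NF_cong) (simp_all add: D2 cr_def)

definition g :: "nat \<Rightarrow> z2poly" where
  "g j = (if j < n then thetaA A n j - Var j ^ 2 else thetaA A n j)"

lemma Var_sq: "j \<in> {1..n-1} \<Longrightarrow> Var j ^ 2 = NF (n-1) (\<lambda>k. if k = j then 1 else 0) (\<lambda>k l. 0)"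
  using Lf_square[of "n-1" "\<lambda>k. if k = j then 1 else 0"] Lf_delta[of j "n-1"] by (simp add: power2_eq_square)

lemma g_NF: "j \<in> {1..n} \<Longrightarrow> g j = NF (n-1) (\<lambda>k. 0) (cr j)"
proof -
  assume j: "j \<in> {1..n}"
  show ?thesis
  proof (cases "j < n")
    case True
    then have j': "j \<in> {1..n-1}" using j by auto
    have "thetaA A n j = NF (n-1) (\<lambda>k. 0) (cr j) + Var j ^ 2"
      unfolding theta_NF[OF j] Var_sq[OF j'] NF_add by simp
    then show ?thesis using True by (simp add: g_def)
  next
    case False
    then have "j = n" using j by auto
    then show ?thesis using False unfolding g_def theta_NF[OF j] by simp (rule NF_cong; use False j in auto)
  qed
qed

definition Cr :: "(nat \<Rightarrow> bit) \<Rightarrow> nat \<Rightarrow> nat \<Rightarrow> bit" where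
  "Cr c = (\<lambda>k l. \<Sum>j=1..n. c j * cr j k l)"

lemma sum_g: "(\<Sum>j=1..n. Const (c j) * g j) = NF (n-1) (\<lambda>k. 0) (Cr c)"
proof -
  have "(\<Sum>j=1..n. Const (c j) * g j) = (\<Sum>j=1..n. NF (n-1) (\<lambda>k. c j * 0) (\<lambda>k l. c j * cr j k l))"
    by (rule sum.cong) (simp_all add: g_NF NF_scale)
  also have "\<dots> = NF (n-1) (\<lambda>k. 0) (Cr c)"
    by (simp add: NF_sum Cr_def)
  finally show ?thesis .
qed

lemma sum_theta: "(\<Sum>j=1..n. Const (c j) * thetaA A n j) = NF (n-1) c (Cr c)"
proof -
  have "(\<Sum>j=1..n. Const (c j) * thetaA A n j) = (\<Sum>j=1..n. NF (n-1) (\<lambda>k. c j * (if k = j then 1 else 0)) (\<lambda>k l. c j * cr j k l))"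
    by (rule sum.cong) (simp_all add: theta_NF NF_scale)
  also have "\<dots> = NF (n-1) (\<lambda>k. \<Sum>j=1..n. c j * (if k = j then 1 else 0)) (Cr c)"
    by (simp add: NF_sum Cr_def)
  also have "\<dots> = NF (n-1) c (Cr c)"
    by (rule NF_cong) (auto simp: if_distrib cong: if_cong)
  finally show ?thesis .
qed

definition vv :: "nat \<Rightarrow> nat \<Rightarrow> bit" where
  "vv j = (\<lambda>k. alphaS (A k j) + betaS (A k j))"

lemma wA_prod: "wA A n = (\<Prod>j=1..n. 1 + Lf (n-1) (vv j))"
proof -
  have "alphaA A n j = Lf (n-1) (\<lambda>k. alphaS (A k j))" "betaA A n j = Lf (n-1) (\<lambda>k. betaS (A k j))" for j
    by (simp_all add: alphaA_def betaA_def Lf_def)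
  then have "1 + alphaA A n j + betaA A n j = 1 + Lf (n-1) (vv j)" for j
    by (simp add: add.assoc Lf_add vv_def)
  then show ?thesis by (simp add: wA_def add.assoc)
qed

lemma W_one:
  assumes kl: "(k,l) \<in> pairs {1..n-1}"
  shows "(\<Sum>j=1..n. vv j k) * (\<Sum>j=1..n. vv j l) + (\<Sum>j=1..n. vv j k * vv j l) = 1"
proof -
  have k: "k \<in> {1..n-1}" and l: "l \<in> {1..n-1}" and kl': "k < l" using kl by auto
  have s: "(\<Sum>j=1..n. vv j i) = 0" if i: "i \<in> {1..n-1}" for i
  proof -
    have "(\<Sum>j=1..n. vv j i) = (\<Sum>j\<in>{1..n}. of_bool (j \<noteq> i))"
      by (rule sum.cong) (use i in \<open>auto simp: vv_def D3\<close>)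
    also have "\<dots> = of_nat (card ({1..n} - {i}))"
      by (simp add: Diff_eq Int_def)
    also have "card ({1..n} - {i}) = n - 1" using i by (subst card_Diff_singleton) auto
    finally show ?thesis using nodd n1 by (simp add: bit_of_nat)
  qed
  have p: "(\<Sum>j=1..n. vv j k * vv j l) = of_nat (card ({1..n} - {k,l}))"
  proof -
    have "(\<Sum>j=1..n. vv j k * vv j l) = (\<Sum>j\<in>{1..n}. of_bool (j \<notin> {k,l}))"
      by (rule sum.cong) (use k l in \<open>auto simp: vv_def D3\<close>)
    also have "\<dots> = of_nat (card ({1..n} - {k,l}))"
      by (simp add: Diff_eq Int_def)
    finally show ?thesis .
  qed
  have "card ({1..n} - {k,l}) = n - 2"
    using k l kl' by (subst card_Diff_subset) auto
  then show ?thesis using s[OF k] s[OF l] p nodd n1 by (simp add: bit_of_nat)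
qed

lemma hpart_wA: "\<exists>sq. hpart 2 (wA A n) = NF (n-1) sq (\<lambda>k l. 1)"
proof -
  obtain sq where "hpart 2 (wA A n) = NF (n-1) sq
      (\<lambda>k l. (\<Sum>j=1..n. vv j k) * (\<Sum>j=1..n. vv j l) + (\<Sum>j=1..n. vv j k * vv j l))"
    using prod_inv[where t=n and v=vv and m="n-1"] wA_prod by auto
  also have "\<dots> = NF (n-1) sq (\<lambda>k l. 1)"
    apply (rule NF_cong)
     apply simp
    apply (erule W_one)
    done
  finally show ?thesis by blast
qed

lemma val_theta:
  assumes U: "U \<subseteq> {1..n-1}" and j: "j \<in> {1..n}"
  shows "val (thetaA A n j) U = of_bool (j \<in> JA A n U)"
proof -
  have fin: "finite U" using U finite_subset by blast
  have lt: "\<forall>i\<in>U. A i j < 4" using D1 U j by blast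
  note K = ksum_lin[OF fin lt]
  have "val (thetaA A n j) U = (\<Sum>k\<in>U. alphaS (A k j)) * (\<Sum>k\<in>U. betaS (A k j))"
    unfolding theta_Lf by (rule val_Lf_mult[OF U])
  also have "\<dots> = alphaS (ksum (\<lambda>i. A i j) U) * betaS (ksum (\<lambda>i. A i j) U)" using K by simp
  also have "\<dots> = of_bool (ksum (\<lambda>i. A i j) U = 1)" using K ab_prod by blast
  finally show ?thesis using j by (simp add: JA_def)
qed

lemma val_g:
  assumes U: "U \<subseteq> {1..n-1}" and j: "j \<in> {1..n}"
  shows "val (g j) U = of_bool (j \<in> (JA A n U - U) \<union> (U - JA A n U))"
proof (cases "j < n")
  case True
  then have j': "j \<in> {1..n-1}" using j by auto
  have fin: "finite U" using U finite_subset by blast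
  have vsq: "val (Var j ^ 2) U = of_bool (j \<in> U)"
    unfolding Var_sq[OF j'] val_NF[OF U] using fin by simp
  have "thetaA A n j = g j + Var j ^ 2" using True by (simp add: g_def)
  then have "val (thetaA A n j) U = val (g j) U + val (Var j ^ 2) U" by (simp add: val_add)
  then have "val (g j) U = val (thetaA A n j) U + val (Var j ^ 2) U"
    by (simp add: add.assoc)
  then show ?thesis using val_theta[OF U j] vsq by (simp add: bit_of_bool_add) blast
next
  case False
  have "j \<notin> U"
  proof
    assume "j \<in> U"
    then have "j \<le> n - 1" using U by auto
    then show False using False n1 by linarith
  qed
  then show ?thesis using False val_theta[OF U j] by (simp add: g_def)
qed

lemma val_sum_g:
  assumes U: "U \<subseteq> {1..n-1}" and S: "S \<subseteq> {1..n}"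
  shows "val (\<Sum>j=1..n. Const (of_bool (j \<in> S)) * g j) U = of_nat (card (((JA A n U - U) \<union> (U - JA A n U)) \<inter> S))"
proof -
  let ?D = "(JA A n U - U) \<union> (U - JA A n U)"
  have "val (\<Sum>j=1..n. Const (of_bool (j \<in> S)) * g j) U = (\<Sum>j\<in>{1..n}. of_bool (j \<in> S) * val (g j) U)"
    unfolding val_sum[OF finite_atLeastAtMost] val_Const ..
  also have "\<dots> = (\<Sum>j\<in>{1..n}. of_bool (j \<in> S \<and> j \<in> ?D))"
    by (rule sum.cong) (simp_all add: val_g[OF U])
  also have "\<dots> = of_nat (card ({1..n} \<inter> {j. j \<in> S \<and> j \<in> ?D}))" by simp
  also have "{1..n} \<inter> {j. j \<in> S \<and> j \<in> ?D} = ?D \<inter> S" using S by auto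
  finally show ?thesis .
qed

lemma g_lam: "g = (\<lambda>j. if j < n then thetaA A n j - Var j ^ 2 else thetaA A n j)"
  by (simp add: fun_eq_iff g_def)

lemma equiv12:
  "(\<exists>a :: nat \<Rightarrow> bit. let x = (\<Sum>k=1..n-1. Const (a k) * Var k) in
            x ^ 2 + hpart 2 (wA A n) \<in> pspan n (thetaA A n))
        \<longleftrightarrow> sigma2 (n - 1) \<in> pspan n g"
proof -
  obtain sq where sq: "hpart 2 (wA A n) = NF (n-1) sq (\<lambda>k l. 1)" using hpart_wA by blast
  have xsq: "(\<Sum>k=1..n-1. Const (a k) * Var k) ^ 2 = NF (n-1) a (\<lambda>k l. 0)" for a
    using Lf_square[of "n-1" a] by (simp add: Lf_def power2_eq_square)
  have L: "(\<Sum>k=1..n-1. Const (a k) * Var k) ^ 2 + hpart 2 (wA A n) = NF (n-1) (\<lambda>k. a k + sq k) (\<lambda>k l. 1)" for a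
    unfolding xsq sq NF_add by simp
  show ?thesis
  proof
    assume "\<exists>a :: nat \<Rightarrow> bit. let x = (\<Sum>k=1..n-1. Const (a k) * Var k) in
            x ^ 2 + hpart 2 (wA A n) \<in> pspan n (thetaA A n)"
    then obtain a where "(\<Sum>k=1..n-1. Const (a k) * Var k) ^ 2 + hpart 2 (wA A n) \<in> pspan n (thetaA A n)"
      by (auto simp: Let_def)
    then obtain c where "(\<Sum>k=1..n-1. Const (a k) * Var k) ^ 2 + hpart 2 (wA A n) = (\<Sum>j=1..n. Const (c j) * thetaA A n j)"
      unfolding pspan_def by blast
    then have "NF (n-1) (\<lambda>k. a k + sq k) (\<lambda>k l. 1) = NF (n-1) c (Cr c)"
      unfolding L sum_theta .
    then have "\<And>k l. (k,l) \<in> pairs {1..n-1} \<Longrightarrow> 1 = Cr c k l" by (rule NF_unique)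
    then have "sigma2 (n-1) = NF (n-1) (\<lambda>k. 0) (Cr c)"
      unfolding sigma2_NF by (intro NF_cong) auto
    then show "sigma2 (n - 1) \<in> pspan n g" unfolding pspan_def sum_g[symmetric] by blast
  next
    assume "sigma2 (n - 1) \<in> pspan n g"
    then obtain c where "sigma2 (n-1) = (\<Sum>j=1..n. Const (c j) * g j)"
      unfolding pspan_def by blast
    then have c: "NF (n-1) (\<lambda>k. 0) (\<lambda>k l. 1) = NF (n-1) (\<lambda>k. 0) (Cr c)"
      unfolding sigma2_NF sum_g .
    have "NF (n-1) (\<lambda>k. (c k + sq k) + sq k) (\<lambda>k l. 1) = NF (n-1) c (\<lambda>k l. 0) + NF (n-1) (\<lambda>k. 0) (\<lambda>k l. 1)"
      by (simp add: NF_add add.assoc)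
    also have "\<dots> = NF (n-1) c (\<lambda>k l. 0) + NF (n-1) (\<lambda>k. 0) (Cr c)" using c by simp
    also have "\<dots> = NF (n-1) c (Cr c)" by (simp add: NF_add)
    finally have "(\<Sum>k=1..n-1. Const (c k + sq k) * Var k) ^ 2 + hpart 2 (wA A n) \<in> pspan n (thetaA A n)"
      unfolding L pspan_def sum_theta by auto
    then show "\<exists>a :: nat \<Rightarrow> bit. let x = (\<Sum>k=1..n-1. Const (a k) * Var k) in
            x ^ 2 + hpart 2 (wA A n) \<in> pspan n (thetaA A n)"
      by (auto simp: Let_def)
  qed
qed

lemma equiv23:
  "sigma2 (n - 1) \<in> pspan n g \<longleftrightarrow> (\<exists>S \<subseteq> {1..n}. \<forall>U \<subseteq> {1..n-1}.
               card (((JA A n U - U) \<union> (U - JA A n U)) \<inter> S) mod 2 = (card U choose 2) mod 2)"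
proof
  assume "sigma2 (n - 1) \<in> pspan n g"
  then obtain c where c: "sigma2 (n-1) = (\<Sum>j=1..n. Const (c j) * g j)" by (auto simp: pspan_def)
  define S where "S = {j\<in>{1..n}. c j = 1}"
  have S: "S \<subseteq> {1..n}" by (auto simp: S_def)
  have cS: "(\<Sum>j=1..n. Const (c j) * g j) = (\<Sum>j=1..n. Const (of_bool (j \<in> S)) * g j)"
  proof (intro sum.cong refl)
    fix x assume "x \<in> {1..n}"
    then have "c x = of_bool (x \<in> S)" by (cases "c x") (auto simp: S_def)
    then show "Const (c x) * g x = Const (of_bool (x \<in> S)) * g x" by simp
  qed
  have "\<forall>U \<subseteq> {1..n-1}. card (((JA A n U - U) \<union> (U - JA A n U)) \<inter> S) mod 2 = (card U choose 2) mod 2"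
  proof (intro allI impI)
    fix U assume U: "U \<subseteq> {1..n-1}"
    have "(of_nat (card U choose 2) :: bit) = of_nat (card (((JA A n U - U) \<union> (U - JA A n U)) \<inter> S))"
      using val_sigma2[OF U] val_sum_g[OF U S] c cS by simp
    then show "card (((JA A n U - U) \<union> (U - JA A n U)) \<inter> S) mod 2 = (card U choose 2) mod 2"
      by (simp add: bit_of_nat_eq)
  qed
  then show "\<exists>S \<subseteq> {1..n}. \<forall>U \<subseteq> {1..n-1}.
               card (((JA A n U - U) \<union> (U - JA A n U)) \<inter> S) mod 2 = (card U choose 2) mod 2"
    using S by blast
next
  assume "\<exists>S \<subseteq> {1..n}. \<forall>U \<subseteq> {1..n-1}.
               card (((JA A n U - U) \<union> (U - JA A n U)) \<inter> S) mod 2 = (card U choose 2) mod 2"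
  then obtain S where S: "S \<subseteq> {1..n}" and H: "\<And>U. U \<subseteq> {1..n-1} \<Longrightarrow>
      card (((JA A n U - U) \<union> (U - JA A n U)) \<inter> S) mod 2 = (card U choose 2) mod 2" by blast
  let ?c = "\<lambda>j. of_bool (j \<in> S) :: bit"
  have V: "val (sigma2 (n-1)) U = val (\<Sum>j=1..n. Const (?c j) * g j) U" if U: "U \<subseteq> {1..n-1}" for U
    unfolding val_sigma2[OF U] val_sum_g[OF U S] using H[OF U] by (simp add: bit_of_nat_eq)
  have "sigma2 (n-1) = NF (n-1) (\<lambda>k. 0) (Cr ?c)"
    unfolding sigma2_NF
  proof (rule NF_cong)
    fix k l assume kl: "(k,l) \<in> pairs {1..n-1}"
    then have U: "{k,l} \<subseteq> {1..n-1}" by auto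
    have "val (NF (n-1) (\<lambda>k. 0) (\<lambda>k l. 1)) {k,l} = val (NF (n-1) (\<lambda>k. 0) (Cr ?c)) {k,l}"
      using V[OF U] unfolding sigma2_NF sum_g .
    then show "1 = Cr ?c k l" unfolding val_NF_pair[OF kl] by simp
  qed simp
  then have "sigma2 (n - 1) = (\<Sum>j=1..n. Const (?c j) * g j)" unfolding sum_g .
  then show "sigma2 (n - 1) \<in> pspan n g"
    by (simp only: pspan_def mem_Collect_eq) (rule exI[where x="?c"], simp)
qed

end

theorem mainTheorem7:
  fixes n :: nat and A :: "nat \<Rightarrow> nat \<Rightarrow> nat"
  assumes "n > 1" and "odd n" and "distinguished (n - 1) n A"
  shows "((\<exists>a :: nat \<Rightarrow> bit. let x = (\<Sum>k=1..n-1. Const (a k) * Var k) in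
            x ^ 2 + hpart 2 (wA A n) \<in> pspan n (thetaA A n))
        \<longleftrightarrow> sigma2 (n - 1) \<in> pspan n (\<lambda>j. if j < n then thetaA A n j - Var j ^ 2 else thetaA A n j))
      \<and> (sigma2 (n - 1) \<in> pspan n (\<lambda>j. if j < n then thetaA A n j - Var j ^ 2 else thetaA A n j)
        \<longleftrightarrow> (\<exists>S \<subseteq> {1..n}. \<forall>U \<subseteq> {1..n-1}.
               card (((JA A n U - U) \<union> (U - JA A n U)) \<inter> S) mod 2 = (card U choose 2) mod 2))"
  using equiv12[OF assms] equiv23[OF assms] unfolding g_lam[OF assms] by blast

end
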